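(* Let $\|\cdot\|$ be a norm on $\mathbb{R}^d$, $\rho\ge 0$, and $\eta\in[0,1)$. Define $$\mathcal{G}_{\mathsf{mean}}(\rho,\eta)=\Big\{p \;:\; \|\mathbb{E}_r[X]-\mathbb{E}_p[X]\|\le\rho \text{ for all } r\le \tfrac{p}{1-\eta}\Big\}.$$ Then for every $\epsilon$ with $2\epsilon\le\eta<1$, $$\sup_{p_1,p_2\in\mathcal{G}_{\mathsf{mean}}(\rho,\eta):\ \mathsf{TV}(p_1,p_2)\le 2\epsilon}\ \|\mathbb{E}_{p_1}[X]-\mathbb{E}_{p_2}[X]\|\le 2\rho .$$
   Context: All distributions are probability distributions on $\mathbb{R}^d$ (with finite means where used). For distributions $r,p$ and $\eta\in[0,1)$, the notation $r\le \frac{p}{1-\eta}$ means that $r$ is a probability distribution with $r(A)\le p(A)/(1-\eta)$ for every measurable set $A$ (i.e. $r$ is obtained from $p$ by deleting at most an $\eta$ fraction of mass and renormalizing). $\mathsf{TV}(p,q)=\sup_A |p(A)-q(A)|$ is the total variation distance. *)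

theory Defs
  imports "HOL-Probability.Probability"
begin

definition is_norm :: "('a::euclidean_space \<Rightarrow> real) \<Rightarrow> bool" where
  "is_norm N \<longleftrightarrow> (\<forall>x. N x \<ge> 0) \<and> (\<forall>x. N x = 0 \<longleftrightarrow> x = 0)
     \<and> (\<forall>c x. N (c *\<^sub>R x) = \<bar>c\<bar> * N x) \<and> (\<forall>x y. N (x + y) \<le> N x + N y)"

definition is_distr :: "'a::euclidean_space measure \<Rightarrow> bool" where
  "is_distr p \<longleftrightarrow> prob_space p \<and> sets p = sets borel"

definition has_mean :: "'a::euclidean_space measure \<Rightarrow> bool" where
  "has_mean p \<longleftrightarrow> is_distr p \<and> integrable p (\<lambda>x. x)"

definition mean :: "'a::euclidean_space measure \<Rightarrow> 'a" where
  "mean p = integral\<^sup>L p (\<lambda>x. x)"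

definition deletion_le :: "'a::euclidean_space measure \<Rightarrow> 'a measure \<Rightarrow> real \<Rightarrow> bool" where
  "deletion_le r p eta \<longleftrightarrow> is_distr r \<and>
     (\<forall>A\<in>sets borel. measure r A \<le> measure p A / (1 - eta))"

definition TV :: "'a::euclidean_space measure \<Rightarrow> 'a measure \<Rightarrow> real" where
  "TV p q = (SUP A\<in>sets borel. \<bar>measure p A - measure q A\<bar>)"

definition G_mean :: "('a::euclidean_space \<Rightarrow> real) \<Rightarrow> real \<Rightarrow> real \<Rightarrow> 'a measure set" where
  "G_mean N rho eta = {p. has_mean p \<and>
     (\<forall>r. deletion_le r p eta \<longrightarrow> N (mean r - mean p) \<le> rho)}"

end

theory Submission
  imports Defs
begin

lemma overlap_measure:
  fixes p1 p2 :: "'a::euclidean_space measure" and eta :: real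
  assumes d1: "is_distr p1" and d2: "is_distr p2" and e0: "0 \<le> eta" and e1: "eta < 1"
    and tv: "TV p1 p2 \<le> eta"
  shows "\<exists>r. deletion_le r p1 eta \<and> deletion_le r p2 eta"
proof -
  interpret P1: prob_space p1 using d1 by (simp add: is_distr_def)
  interpret P2: prob_space p2 using d2 by (simp add: is_distr_def)
  have s1: "sets p1 = sets borel" and s2: "sets p2 = sets borel" using d1 d2 by (auto simp: is_distr_def)
  have sp1: "space p1 = UNIV" using sets_eq_imp_space_eq[OF s1] by simp
  have sp2: "space p2 = UNIV" using sets_eq_imp_space_eq[OF s2] by simp
  obtain Y where Y: "Y \<in> sets p1" and Y1: "\<forall>X\<in>sets p1. X \<subseteq> Y \<longrightarrow> p2 X \<le> p1 X"
      and Y2: "\<forall>X\<in>sets p1. X \<inter> Y = {} \<longrightarrow> p1 X \<le> p2 X"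
    using finite_unsigned_Hahn_decomposition[of p1 p2] s1 s2
      P1.finite_measure_axioms P2.finite_measure_axioms by auto
  have Yb: "Y \<in> sets borel" using Y s1 by simp
  define c where "c = measure p2 Y + measure p1 (UNIV - Y)"
  have bdd: "bdd_above ((\<lambda>A. \<bar>measure p1 A - measure p2 A\<bar>) ` sets borel)"
  proof (rule bdd_aboveI[where M=1])
    fix x assume "x \<in> (\<lambda>A. \<bar>measure p1 A - measure p2 A\<bar>) ` sets borel"
    then obtain A where "x = \<bar>measure p1 A - measure p2 A\<bar>" by auto
    moreover have "measure p1 A \<le> 1" "measure p2 A \<le> 1" "measure p1 A \<ge> 0" "measure p2 A \<ge> 0"
      by (auto simp: P1.prob_le_1 P2.prob_le_1)
    ultimately show "x \<le> 1" by linarith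
  qed
  have "\<bar>measure p1 Y - measure p2 Y\<bar> \<le> TV p1 p2"
    unfolding TV_def using bdd Yb by (rule cSUP_upper2) simp
  moreover have "measure p1 (UNIV - Y) = 1 - measure p1 Y"
    using P1.prob_compl[of Y] Y sp1 by simp
  ultimately have c_ge: "c \<ge> 1 - eta" using tv unfolding c_def by linarith
  have cpos: "c > 0" using c_ge e1 by linarith
  define mu where "mu A = ennreal (1/c) * (emeasure p2 (A \<inter> Y) + emeasure p1 (A - Y))" for A
  define r where "r = measure_of UNIV (sets borel) mu"
  have sa: "sigma_algebra UNIV (sets borel)"
    by (metis sets.sigma_algebra_axioms space_borel)
  have pos: "positive (sets borel) mu" unfolding positive_def mu_def by simp
  have ca: "countably_additive (sets borel) mu"
  proof (rule countably_additiveI)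
    fix A :: "nat \<Rightarrow> 'a set"
    assume A: "range A \<subseteq> sets borel" "disjoint_family A" "\<Union> (range A) \<in> sets borel"
    have a2: "(\<Sum>i. emeasure p2 (A i \<inter> Y)) = emeasure p2 (\<Union>i. A i \<inter> Y)"
      apply (rule suminf_emeasure)
      using A Yb s2 by (auto simp: disjoint_family_on_def)
    have a1: "(\<Sum>i. emeasure p1 (A i - Y)) = emeasure p1 (\<Union>i. A i - Y)"
      apply (rule suminf_emeasure)
      using A Yb s1 by (auto simp: disjoint_family_on_def)
    have "(\<Sum>i. mu (A i)) = ennreal (1/c) * (\<Sum>i. emeasure p2 (A i \<inter> Y) + emeasure p1 (A i - Y))"
      unfolding mu_def by (rule ennreal_suminf_cmult)
    also have "\<dots> = ennreal (1/c) * ((\<Sum>i. emeasure p2 (A i \<inter> Y)) + (\<Sum>i. emeasure p1 (A i - Y)))"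
      by (simp add: suminf_add)
    also have "\<dots> = mu (\<Union> (range A))"
    proof -
      have u1: "(\<Union>i. A i \<inter> Y) = \<Union> (range A) \<inter> Y" by blast
      have u2: "(\<Union>i. A i - Y) = \<Union> (range A) - Y" by blast
      show ?thesis unfolding mu_def a1 a2 u1 u2 by (rule refl)
    qed
    finally show "(\<Sum>i. mu (A i)) = mu (\<Union> (range A))" .
  qed
  have er: "emeasure r A = mu A" if "A \<in> sets borel" for A
    unfolding r_def using emeasure_measure_of_sigma[OF sa pos ca that] .
  have sr: "sets r = sets borel" unfolding r_def using sigma_algebra.sigma_sets_eq[OF sa] by simp
  have spr: "space r = UNIV" unfolding r_def by simp
  have mu_real: "mu A = ennreal ((1/c) * (measure p2 (A \<inter> Y) + measure p1 (A - Y)))" for A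
  proof -
    have "ennreal (measure p2 (A \<inter> Y)) + ennreal (measure p1 (A - Y)) = ennreal (measure p2 (A \<inter> Y) + measure p1 (A - Y))"
      by (rule ennreal_plus[symmetric]) auto
    then show ?thesis unfolding mu_def P1.emeasure_eq_measure P2.emeasure_eq_measure
      using cpos by (metis ennreal_mult' less_eq_real_def zero_le_divide_1_iff)
  qed
  have mr: "measure r A = (1/c) * (measure p2 (A \<inter> Y) + measure p1 (A - Y))" if "A \<in> sets borel" for A
    using er[OF that] mu_real[of A] cpos unfolding measure_def by simp
  have "emeasure r (space r) = 1"
  proof -
    have "(1/c) * (measure p2 (UNIV \<inter> Y) + measure p1 (UNIV - Y)) = 1"
      using cpos unfolding c_def by simp
    then show ?thesis using er[of UNIV] mu_real[of UNIV] unfolding spr by simp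
  qed
  then have "prob_space r" by (rule prob_spaceI)
  then have dr: "is_distr r" using sr by (simp add: is_distr_def)
  have key: "(1/c) * m \<le> m / (1 - eta)" if "m \<ge> 0" for m
  proof -
    have "1/c \<le> 1/(1-eta)" using c_ge e1 by (intro divide_left_mono) auto
    then have "(1/c) * m \<le> (1/(1-eta)) * m" using that by (rule mult_right_mono)
    then show ?thesis by simp
  qed
  have "deletion_le r p1 eta" unfolding deletion_le_def
  proof (intro conjI dr ballI)
    fix A :: "'a set" assume A: "A \<in> sets borel"
    have X: "A \<inter> Y \<in> sets p1" using A Yb s1 by auto
    have "emeasure p2 (A \<inter> Y) \<le> emeasure p1 (A \<inter> Y)" using Y1 X by blast
    then have "measure p2 (A \<inter> Y) \<le> measure p1 (A \<inter> Y)"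
      unfolding P1.emeasure_eq_measure P2.emeasure_eq_measure by simp
    then have "measure p2 (A \<inter> Y) + measure p1 (A - Y) \<le> measure p1 A"
      using P1.finite_measure_Diff'[of A Y] A Yb s1 by (simp add: Int_commute)
    then show "measure r A \<le> measure p1 A / (1 - eta)"
    proof -
      have "(1/c) * (measure p2 (A \<inter> Y) + measure p1 (A - Y)) \<le> (1/c) * measure p1 A"
        using \<open>measure p2 (A \<inter> Y) + measure p1 (A - Y) \<le> measure p1 A\<close> cpos
        by (intro mult_left_mono) auto
      then show ?thesis using mr[OF A] key[of "measure p1 A"] by simp
    qed
  qed
  moreover have "deletion_le r p2 eta" unfolding deletion_le_def
  proof (intro conjI dr ballI)
    fix A :: "'a set" assume A: "A \<in> sets borel"
    have X: "A - Y \<in> sets p1" using A Yb s1 by auto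
    have "emeasure p1 (A - Y) \<le> emeasure p2 (A - Y)" using Y2 X by blast
    then have "measure p1 (A - Y) \<le> measure p2 (A - Y)"
      unfolding P1.emeasure_eq_measure P2.emeasure_eq_measure by simp
    then have "measure p2 (A \<inter> Y) + measure p1 (A - Y) \<le> measure p2 A"
      using P2.finite_measure_Diff'[of A Y] A Yb s2 by (simp add: Int_commute)
    then show "measure r A \<le> measure p2 A / (1 - eta)"
    proof -
      have "(1/c) * (measure p2 (A \<inter> Y) + measure p1 (A - Y)) \<le> (1/c) * measure p2 A"
        using \<open>measure p2 (A \<inter> Y) + measure p1 (A - Y) \<le> measure p2 A\<close> cpos
        by (intro mult_left_mono) auto
      then show ?thesis using mr[OF A] key[of "measure p2 A"] by simp
    qed
  qed
  ultimately show ?thesis by blast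
qed

theorem lemma3p1:
  fixes N :: "'a::euclidean_space \<Rightarrow> real" and rho eta eps :: real
  assumes "is_norm N" and "rho \<ge> 0" and "0 \<le> eta" and "eta < 1" and "2 * eps \<le> eta"
  shows "(\<forall>p1\<in>G_mean N rho eta. \<forall>p2\<in>G_mean N rho eta.
            TV p1 p2 \<le> 2 * eps \<longrightarrow> N (mean p1 - mean p2) \<le> 2 * rho)"
proof (intro ballI impI)
  fix p1 p2 assume g1: "p1 \<in> G_mean N rho eta" and g2: "p2 \<in> G_mean N rho eta"
    and tv: "TV p1 p2 \<le> 2 * eps"
  have hom: "\<And>c x. N (c *\<^sub>R x) = \<bar>c\<bar> * N x"
    using assms(1) unfolding is_norm_def by blast
  have tri: "\<And>x y. N (x + y) \<le> N x + N y"
    using assms(1) unfolding is_norm_def by blast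
  have G1: "has_mean p1" "\<forall>r. deletion_le r p1 eta \<longrightarrow> N (mean r - mean p1) \<le> rho"
    using g1 unfolding G_mean_def by simp_all
  have G2: "has_mean p2" "\<forall>r. deletion_le r p2 eta \<longrightarrow> N (mean r - mean p2) \<le> rho"
    using g2 unfolding G_mean_def by simp_all
  have d1: "is_distr p1" using G1(1) unfolding has_mean_def by simp
  have d2: "is_distr p2" using G2(1) unfolding has_mean_def by simp
  have "TV p1 p2 \<le> eta" using tv assms(5) by linarith
  then obtain r where r1: "deletion_le r p1 eta" and r2: "deletion_le r p2 eta"
    using overlap_measure[OF d1 d2 assms(3,4)] by blast
  have n1: "N (mean r - mean p1) \<le> rho" using G1(2) r1 by blast
  have n2: "N (mean r - mean p2) \<le> rho" using G2(2) r2 by blast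
  have e: "mean p1 - mean r = (-1) *\<^sub>R (mean r - mean p1)" by simp
  have neg: "N (mean p1 - mean r) = N (mean r - mean p1)"
    unfolding e hom by simp
  have e2: "mean p1 - mean p2 = (mean p1 - mean r) + (mean r - mean p2)" by simp
  have "N (mean p1 - mean p2) \<le> N (mean p1 - mean r) + N (mean r - mean p2)"
    unfolding e2 by (rule tri)
  then show "N (mean p1 - mean p2) \<le> 2 * rho" using n1 n2 neg by linarith
qed

end
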